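(* Let $q$ be a prime with $q \ge 7$, and let \[ H_2(r,s) = r^2 + (6s^2 - 4s^3 - 4s)\,r + s^4 \in \mathbb F_q[r,s]. \] Then the set $\mathfrak P = \{(r,s) \in \mathbb F_q^2 : r \notin\{0,1\},\ s\notin\{0,1\},\ H_2(r,s)=0\}$ has exactly $q-5$ elements.
   Context: Geometric meaning (not needed for the statement): for $\alpha \in \mathbb F_q\setminus\{0,1\}$ let $C_\alpha$ be the nonsingular conic $\alpha xy + (1-\alpha)xz - yz = 0$, the members of the pencil through $[1,0,0],[0,1,0],[0,0,1],[1,1,1]$. By Cayley's criterion, the pair $(C_r,C_s)$ satisfies the Poncelet triangle condition exactly when $H_2(r,s)=0$, so $\mathfrak P$ is the set of such pairs in this pencil. *)

theory Defs
  imports "HOL-Computational_Algebra.Primes"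
begin

definition H2 :: "'a::comm_ring_1 \<Rightarrow> 'a \<Rightarrow> 'a" where
  "H2 r s = r^2 + (6 * s^2 - 4 * s^3 - 4 * s) * r + s^4"

definition poncelet_set :: "('a::comm_ring_1 \<times> 'a) set" where
  "poncelet_set = {(r, s). r \<notin> {0, 1} \<and> s \<notin> {0, 1} \<and> H2 r s = 0}"

end

theory Submission
  imports Defs "HOL-Number_Theory.Residues"
begin

definition BB :: "'a::field \<Rightarrow> 'a" where "BB s = 2*s^2 - 3*s + 2"
definition fs :: "'a::field \<Rightarrow> 'a" where "fs u = (u^2 - 1) / (2*u - 1)"
definition fr :: "'a::field \<Rightarrow> 'a" where "fr u = (u+1)*(u-1)^3 / (2*u - 1)"
definition gg :: "'a::field \<times> 'a \<Rightarrow> 'a" where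
  "gg p = snd p + (fst p - snd p * BB (snd p)) / (2 * snd p * (snd p - 1))"

lemma H2_alt: "H2 r s = (r - s*BB s)^2 - 4*s^2*(s-1)^2*(s^2-s+1)"
  unfolding H2_def BB_def by (simp add: power2_eq_square power3_eq_cube power4_eq_xxxx algebra_simps)

lemma fs_eq: assumes "2*u - 1 \<noteq> (0::'a::field)" shows "fs u * (2*u-1) = u^2 - 1"
  using assms unfolding fs_def by simp

lemma t_sq: assumes "s * (2*u-1) = u^2 - 1" shows "(u - s)^2 = s^2 - s + (1::'a::field)"
proof -
  have "(u - s)^2 - (s^2 - s + 1) = -(s * (2*u-1) - (u^2 - 1))"
    by (simp add: power2_eq_square algebra_simps)
  then show ?thesis using assms by simp
qed

lemma rep0: fixes u s :: "'a::field"
  assumes "s * (2*u-1) = u^2 - 1"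
  shows "(u+1)*(u-1)^3 = (2*u-1) * (s * (2*s^2 - 3*s + 2) + 2*s*(s - 1)*(u - s))"
proof -
  have h1: "s * (2*s^2 - 3*s + 2) + 2*s*(s - 1)*(u - s) = s * (s * (2*u-1) - 2*u + 2)"
    by (simp add: power2_eq_square algebra_simps)
  have "(2*u-1) * (s * (s * (2*u-1) - 2*u + 2)) = (s*(2*u-1)) * (s * (2*u-1) - 2*u + 2)"
    by (simp add: algebra_simps)
  also have "\<dots> = (u^2-1) * (u^2 - 1 - 2*u + 2)" using assms by simp
  also have "\<dots> = (u+1)*(u-1)^3" by (simp add: power2_eq_square power3_eq_cube algebra_simps)
  finally show ?thesis using h1 by simp
qed

lemma rep: assumes "2*u - 1 \<noteq> (0::'a::field)"
  shows "fr u = fs u * BB (fs u) + 2*fs u*(fs u - 1)*(u - fs u)"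
proof -
  have "(u+1)*(u-1)^3 = (2*u-1) * (fs u * BB (fs u) + 2*fs u*(fs u - 1)*(u - fs u))"
    using rep0[OF fs_eq[OF assms]] unfolding BB_def .
  then show ?thesis unfolding fr_def using assms by (simp add: field_simps)
qed

lemma H2_r: fixes r s :: "'a::field"
  assumes "H2 r s = 0" "s \<noteq> 0" "s \<noteq> 1" shows "r \<noteq> 0 \<and> r \<noteq> 1"
proof -
  have "H2 0 s = s^4" unfolding H2_def by simp
  moreover have "H2 1 s = (s-1)^4" unfolding H2_def
    by (simp add: power2_eq_square power3_eq_cube power4_eq_xxxx algebra_simps)
  ultimately show ?thesis using assms by auto
qed

lemma backw: fixes r s :: "'a::field"
  assumes two: "(2::'a) \<noteq> 0" and three: "(3::'a) \<noteq> 0"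
    and H: "H2 r s = 0" and s0: "s \<noteq> 0" and s1: "s \<noteq> 1"
  shows "2 * gg (r,s) - 1 \<noteq> 0 \<and> s * (2 * gg (r,s) - 1) = (gg (r,s))^2 - 1
    \<and> r = s * BB s + 2*s*(s-1)*(gg (r,s) - s)"
proof -
  define u where "u = gg (r,s)"
  define t where "t = u - s"
  have c: "2*s*(s-1) \<noteq> 0" using two s0 s1 by simp
  have tdef: "t = (r - s * BB s) / (2*s*(s-1))" unfolding t_def u_def gg_def by simp
  have rt: "r - s * BB s = 2*s*(s-1)*t" using c tdef by simp
  have "(2*s*(s-1)*t)^2 = 4*s^2*(s-1)^2*(s^2-s+1)" using H rt unfolding H2_alt by simp
  hence "(2*s*(s-1))^2 * t^2 = (2*s*(s-1))^2*(s^2-s+1)"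
    by (simp add: power_mult_distrib)
  hence tsq: "t^2 = s^2-s+1" using c by simp
  have rel: "s * (2*u-1) = u^2 - 1"
  proof -
    have "u^2 - 1 - s*(2*u-1) = t^2 - (s^2 - s + 1)" unfolding t_def
      by (simp add: power2_eq_square algebra_simps)
    thus ?thesis using tsq by simp
  qed
  have d: "2*u - 1 \<noteq> 0"
  proof
    assume h: "2*u-1 = 0"
    hence "(u-1)*(u+1) = 0" using rel by (simp add: power2_eq_square algebra_simps)
    hence "u - 1 = 0 \<or> u + 1 = 0" by simp
    hence "u = 1 \<or> u = -1" by (auto simp: eq_neg_iff_add_eq_0 add.commute)
    thus False
    proof
      assume "u = 1" thus False using h by simp
    next
      assume "u = -1" hence "(3::'a) = 0" using h by simp
      thus False using three by simp
    qed
  qed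
  have rr: "r = s*BB s + 2*s*(s-1)*(u-s)" unfolding t_def[symmetric] rt[symmetric] by simp
  show ?thesis using d rel rr unfolding u_def[symmetric] by simp
qed

theorem mainTheorem2:
  fixes q :: nat
  assumes "prime q" and "q \<ge> 7"
    and "card (UNIV :: 'a::{field, finite} set) = q"
  shows "card (poncelet_set :: ('a \<times> 'a) set) = q - 5"
proof -
  have "CHAR('a) dvd q" using CHAR_dvd_CARD[where 'a='a] assms(3) by simp
  hence CH: "CHAR('a) = q" using assms(1) CHAR_not_1'[where 'a='a] unfolding prime_nat_iff One_nat_def by blast
  have two: "(2::'a) \<noteq> 0"
  proof
    assume "(2::'a) = 0" hence "(of_nat 2::'a) = 0" by simp
    hence "q dvd 2" using of_nat_eq_0_iff_char_dvd CH by metis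
    thus False using assms(2) by (auto dest: dvd_imp_le)
  qed
  have three: "(3::'a) \<noteq> 0"
  proof
    assume "(3::'a) = 0" hence "(of_nat 3::'a) = 0" by simp
    hence "q dvd 3" using of_nat_eq_0_iff_char_dvd CH by metis
    thus False using assms(2) by (auto dest: dvd_imp_le)
  qed
  define S :: "'a set" where "S = {0, 1, -1, 2, 1/2}"
  define A where "A = UNIV - S"
  have cS: "card S = 5"
  proof -
    have n1: "(1::'a) \<noteq> -1" 
    proof assume "(1::'a) = -1" hence "(1::'a) + 1 = 0" by simp thus False using two by simp qed
    have n2: "(-1::'a) \<noteq> 2"
    proof assume "(-1::'a) = 2" hence "(2::'a) + 1 = 0" by simp thus False using three by simp qed
    have n6: "(1::'a) \<noteq> 2"
    proof assume "(1::'a) = 2" hence "(1::'a) + 1 = 1" by simp thus False by (metis add_cancel_left_right one_neq_zero) qed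
    have n3: "(1::'a) \<noteq> 1/2" using two n6 by (simp add: field_simps)
    have n4: "(-1::'a) \<noteq> 1/2" using two three by (simp add: field_simps) 
    have h4: "(4::'a) \<noteq> 1"
    proof assume "(4::'a) = 1" hence "(3::'a) + 1 = 0 + 1" by simp thus False using three by (metis add_right_cancel) qed
    have n5: "(2::'a) \<noteq> 1/2" using two three h4 by (simp add: field_simps)
    show ?thesis unfolding S_def using two n1 n2 n3 n4 n5 n6
      not_sym[OF two] not_sym[OF n1] not_sym[OF n2] not_sym[OF n3] not_sym[OF n4] not_sym[OF n5] not_sym[OF n6]
      by simp
  qed
  have cA: "card A = q - 5" unfolding A_def using cS assms(3)
    by (simp add: card_Diff_subset)
  have bij: "bij_betw (\<lambda>u. (fr u, fs u)) A (poncelet_set :: ('a \<times> 'a) set)"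
  proof (rule bij_betw_byWitness[where f'=gg])
    show "\<forall>u\<in>A. gg (fr u, fs u) = u"
    proof
      fix u assume "u \<in> A"
      hence u: "u \<noteq> 0" "u \<noteq> 1" "u \<noteq> -1" "u \<noteq> 2" "u \<noteq> 1/2" unfolding A_def S_def by auto
      have d: "2*u - 1 \<noteq> 0" using u two by (auto simp: field_simps)
      have rel: "fs u * (2*u-1) = u^2 - 1" by (rule fs_eq[OF d])
      have s0: "fs u \<noteq> 0"
      proof
        assume "fs u = 0" hence "(u-1)*(u+1) = 0" using rel by (simp add: power2_eq_square algebra_simps)
        thus False using u by (auto simp: eq_neg_iff_add_eq_0)
      qed
      have s1: "fs u \<noteq> 1"
      proof
        assume "fs u = 1" hence "u*(u-2) = 0" using rel by (simp add: power2_eq_square algebra_simps)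
        thus False using u by auto
      qed
      have c: "2*fs u*(fs u-1) \<noteq> 0" using two s0 s1 by simp
      show "gg (fr u, fs u) = u" unfolding gg_def using rep[OF d] c by simp
    qed
  next
    show "\<forall>p\<in>poncelet_set. (fr (gg p), fs (gg p)) = (p :: 'a \<times> 'a)"
    proof
      fix p :: "'a \<times> 'a" assume "p \<in> poncelet_set"
      then obtain r s where p: "p = (r,s)" "H2 r s = 0" "s \<noteq> 0" "s \<noteq> 1"
        unfolding poncelet_set_def by auto
      note B = backw[OF two three p(2-4)]
      have "fs (gg (r,s)) * (2 * gg (r,s) - 1) = s * (2 * gg (r,s) - 1)"
        using fs_eq[of "gg (r,s)"] B by simp
      hence fsr: "fs (gg (r,s)) = s" using conjunct1[OF B] mult_right_cancel by blast
      show "(fr (gg p), fs (gg p)) = p" using rep[of "gg (r,s)"] B fsr p(1) by simp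
    qed
  next
    show "(\<lambda>u. (fr u, fs u)) ` A \<subseteq> poncelet_set"
    proof
      fix x assume "x \<in> (\<lambda>u. (fr u, fs u)) ` A"
      then obtain u where x: "x = (fr u, fs u)" and "u \<in> A" by auto
      hence u: "u \<noteq> 0" "u \<noteq> 1" "u \<noteq> -1" "u \<noteq> 2" "u \<noteq> 1/2" unfolding A_def S_def by auto
      have d: "2*u - 1 \<noteq> 0" using u two by (auto simp: field_simps)
      have rel: "fs u * (2*u-1) = u^2 - 1" by (rule fs_eq[OF d])
      have s0: "fs u \<noteq> 0"
      proof
        assume "fs u = 0" hence "(u-1)*(u+1) = 0" using rel by (simp add: power2_eq_square algebra_simps)
        thus False using u by (auto simp: eq_neg_iff_add_eq_0)
      qed
      have s1: "fs u \<noteq> 1"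
      proof
        assume "fs u = 1" hence "u*(u-2) = 0" using rel by (simp add: power2_eq_square algebra_simps)
        thus False using u by auto
      qed
      have H: "H2 (fr u) (fs u) = 0"
        unfolding H2_alt rep[OF d] using t_sq[OF rel]
        by (simp add: power_mult_distrib)
      show "x \<in> poncelet_set" unfolding x poncelet_set_def using H s0 s1 H2_r[OF H s0 s1] by simp
    qed
  next
    show "gg ` poncelet_set \<subseteq> A"
    proof
      fix x assume "x \<in> gg ` (poncelet_set :: ('a \<times> 'a) set)"
      then obtain r s where x: "x = gg (r,s)" and p: "H2 r s = 0" "s \<noteq> 0" "s \<noteq> 1"
        unfolding poncelet_set_def by auto
      note B = backw[OF two three p]
      define u where "u = gg (r,s)"
      have d: "2*u-1 \<noteq> 0" and rel: "s*(2*u-1) = u^2 - 1" using B unfolding u_def by auto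
      have a1: "u \<noteq> 1/2" using d two by (auto simp: field_simps)
      have a2: "u \<noteq> 1 \<and> u \<noteq> -1" using rel p(2) d by (auto simp: power2_eq_square)
      have a3: "u \<noteq> 0" using rel p(3) by auto
      have a4: "u \<noteq> 2" using rel p(3) three by (auto simp: power2_eq_square)
      show "x \<in> A" unfolding A_def S_def x u_def[symmetric] using a1 a2 a3 a4 by auto
    qed
  qed
  show ?thesis using bij_betw_same_card[OF bij] cA by simp
qed

end
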